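(* Every Young subgroup $\mathrm{Sym}(\lambda)\leq\mathrm{Sym}(n)$, with its natural action on $\{1,\dots,n\}$, has the EKR property.
   Context: For a partition $\lambda=[\lambda_1,\dots,\lambda_k]$ of $n$, let $\Omega_i=\{\lambda_1+\cdots+\lambda_{i-1}+1,\dots,\lambda_1+\cdots+\lambda_i\}$; the Young subgroup $\mathrm{Sym}(\lambda)$ is the subgroup $\mathrm{Sym}(\Omega_1)\cdots\mathrm{Sym}(\Omega_k)$ of permutations preserving each $\Omega_i$. Two permutations $\pi,\tau$ intersect if $\pi\tau^{-1}$ has a fixed point; a subset is intersecting if every pair intersects; a group has the EKR property if every intersecting subset has size at most the size of the largest point-stabilizer. *)

theory Defs
  imports "HOL-Combinatorics.Permutations"
begin

definition is_partition :: "nat list \<Rightarrow> nat \<Rightarrow> bool" where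
  "is_partition lam n \<longleftrightarrow> sorted_wrt (\<ge>) lam \<and> (\<forall>x\<in>set lam. 0 < x) \<and> sum_list lam = n"

text \<open>The i-th block (0-indexed), corresponding to \<Omega>_{i+1} in the paper.\<close>
definition young_block :: "nat list \<Rightarrow> nat \<Rightarrow> nat set" where
  "young_block lam i = {sum_list (take i lam) + 1 .. sum_list (take (Suc i) lam)}"

definition young_subgroup :: "nat list \<Rightarrow> (nat \<Rightarrow> nat) set" where
  "young_subgroup lam = {p. p permutes {1..sum_list lam} \<and>
      (\<forall>i < length lam. p ` young_block lam i = young_block lam i)}"

definition perms_intersect :: "'a set \<Rightarrow> ('a \<Rightarrow> 'a) \<Rightarrow> ('a \<Rightarrow> 'a) \<Rightarrow> bool" where
  "perms_intersect \<Omega> p q \<longleftrightarrow> (\<exists>x\<in>\<Omega>. (p \<circ> inv q) x = x)"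

definition intersecting_set :: "'a set \<Rightarrow> ('a \<Rightarrow> 'a) set \<Rightarrow> ('a \<Rightarrow> 'a) set \<Rightarrow> bool" where
  "intersecting_set \<Omega> G S \<longleftrightarrow> S \<subseteq> G \<and> (\<forall>p\<in>S. \<forall>q\<in>S. perms_intersect \<Omega> p q)"

definition point_stabilizer :: "('a \<Rightarrow> 'a) set \<Rightarrow> 'a \<Rightarrow> ('a \<Rightarrow> 'a) set" where
  "point_stabilizer G x = {g \<in> G. g x = x}"

definition has_EKR :: "'a set \<Rightarrow> ('a \<Rightarrow> 'a) set \<Rightarrow> bool" where
  "has_EKR \<Omega> G \<longleftrightarrow> (\<forall>S. intersecting_set \<Omega> G S \<longrightarrow>
       card S \<le> Max ((\<lambda>x. card (point_stabilizer G x)) ` \<Omega>))"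

end

theory Submission
  imports Defs
begin


definition blockgrp :: "'a set \<Rightarrow> 'b set \<Rightarrow> ('b \<Rightarrow> 'a set) \<Rightarrow> ('a \<Rightarrow> 'a) set" where
  "blockgrp \<Omega> I B = {p. p permutes \<Omega> \<and> (\<forall>i\<in>I. p ` B i = B i)}"

lemma blockgrp_comp:
  assumes "p \<in> blockgrp \<Omega> I B" "q \<in> blockgrp \<Omega> I B"
  shows "p \<circ> q \<in> blockgrp \<Omega> I B"
proof -
  have "(p \<circ> q) ` B i = B i" if "i \<in> I" for i
  proof -
    have "(p \<circ> q) ` B i = p ` (q ` B i)" by (rule image_comp[symmetric])
    then show ?thesis using assms that unfolding blockgrp_def by simp
  qed
  then show ?thesis using assms unfolding blockgrp_def by (auto simp: permutes_compose)
qed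

lemma fiber_bound:
  assumes fin: "finite \<Omega>" and BI: "\<And>i. i \<in> I \<Longrightarrow> B i \<subseteq> \<Omega>" and j: "j \<in> I"
    and disj: "\<And>i i'. i \<in> I \<Longrightarrow> i' \<in> I \<Longrightarrow> i \<noteq> i' \<Longrightarrow> B i \<inter> B i' = {}"
    and x0: "x0 \<in> B j"
  shows "card (blockgrp \<Omega> I B) \<le> card (B j) * card (point_stabilizer (blockgrp \<Omega> I B) x0)"
proof -
  let ?G = "blockgrp \<Omega> I B"
  let ?St = "point_stabilizer ?G x0"
  have finG: "finite ?G"
    by (rule finite_subset[OF _ finite_permutations[OF fin]]) (auto simp: blockgrp_def)
  have finB: "finite (B j)" using BI[OF j] fin finite_subset by blast
  have sub: "?G \<subseteq> (\<Union>y\<in>B j. {g\<in>?G. g x0 = y})"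
  proof
    fix g assume g: "g \<in> ?G"
    then have "g ` B j = B j" using j by (auto simp: blockgrp_def)
    then have "g x0 \<in> B j" using x0 by blast
    then show "g \<in> (\<Union>y\<in>B j. {g\<in>?G. g x0 = y})" using g by blast
  qed
  have fib: "card {g\<in>?G. g x0 = y} \<le> card ?St" if y: "y \<in> B j" for y
  proof -
    have tG: "transpose x0 y \<in> ?G"
      unfolding blockgrp_def
    proof (intro CollectI conjI ballI)
      show "transpose x0 y permutes \<Omega>" using BI[OF j] x0 y by (intro permutes_swap_id) auto
    next
      fix i assume "i \<in> I"
      show "transpose x0 y ` B i = B i"
      proof (cases "i = j")
        case True then show ?thesis using x0 y by simp
      next
        case False
        show ?thesis
        proof (rule transpose_image_eq)
          show "x0 \<in> B i \<longleftrightarrow> y \<in> B i" using disj[OF \<open>i \<in> I\<close> j False] x0 y by blast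
        qed
      qed
    qed
    show ?thesis
    proof (rule card_inj_on_le[where f = "\<lambda>g. transpose x0 y \<circ> g"])
      show "inj_on (\<lambda>g. transpose x0 y \<circ> g) {g\<in>?G. g x0 = y}"
        by (rule inj_onI) (metis comp_assoc transpose_comp_involutory id_comp)
      show "(\<lambda>g. transpose x0 y \<circ> g) ` {g\<in>?G. g x0 = y} \<subseteq> ?St"
        using tG blockgrp_comp unfolding point_stabilizer_def by auto
      show "finite ?St" using finG unfolding point_stabilizer_def by auto
    qed
  qed
  have "card ?G \<le> card (\<Union>y\<in>B j. {g\<in>?G. g x0 = y})"
    using finG finB sub by (intro card_mono) auto
  also have "\<dots> \<le> (\<Sum>y\<in>B j. card {g\<in>?G. g x0 = y})" by (rule card_UN_le[OF finB])
  also have "\<dots> \<le> (\<Sum>y\<in>B j. card ?St)" by (rule sum_mono) (rule fib)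
  finally show ?thesis by simp
qed
lemma mod_add_cancel_lt:
  fixes a b k L :: nat
  assumes "(a + k) mod L = (b + k) mod L" "a < L" "b < L"
  shows "a = b"
proof -
  have "int ((a + k) mod L) = int ((b + k) mod L)" using assms(1) by simp
  then have "(int a + int k) mod int L = (int b + int k) mod int L" by (simp add: zmod_int)
  then have "((int a + int k) - int k) mod int L = ((int b + int k) - int k) mod int L"
    by (rule mod_diff_cong) simp
  then have "int a mod int L = int b mod int L" by simp
  then show ?thesis using assms(2,3) by simp
qed

lemma clique:
  assumes fin: "finite \<Omega>" and BI: "\<And>i. i \<in> I \<Longrightarrow> B i \<subseteq> \<Omega>"
    and cover: "\<Omega> \<subseteq> (\<Union>i\<in>I. B i)"
    and disj: "\<And>i i'. i \<in> I \<Longrightarrow> i' \<in> I \<Longrightarrow> i \<noteq> i' \<Longrightarrow> B i \<inter> B i' = {}"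
    and mle: "\<And>i. i \<in> I \<Longrightarrow> m \<le> card (B i)"
    and m0: "0 < m"
  shows "\<exists>c. (\<forall>k<m. c k \<in> blockgrp \<Omega> I B) \<and>
             (\<forall>k<m. \<forall>k'<m. k \<noteq> k' \<longrightarrow> (\<forall>x\<in>\<Omega>. c k x \<noteq> c k' x))"
proof -
  define L where "L i = card (B i)" for i
  have "\<forall>i\<in>I. \<exists>h. bij_betw h {0..<L i} (B i)"
    using BI fin by (auto simp: L_def intro!: ex_bij_betw_nat_finite intro: finite_subset)
  then obtain e where e0: "\<forall>i\<in>I. bij_betw (e i) {0..<L i} (B i)" by (rule bchoice[THEN exE])
  have e: "bij_betw (e i) {0..<L i} (B i)" if "i \<in> I" for i using e0 that by blast
  have Lpos: "m \<le> L i" "0 < L i" if "i \<in> I" for i using mle[OF that] m0 by (auto simp: L_def)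
  define blk where "blk x = (SOME i. i \<in> I \<and> x \<in> B i)" for x
  have blk: "blk x = i" if "i \<in> I" "x \<in> B i" for i x
    unfolding blk_def using that disj by (intro some_equality) blast+
  define r where "r i x = inv_into {0..<L i} (e i) x" for i x
  have r: "r i x < L i" "e i (r i x) = x" if "i \<in> I" "x \<in> B i" for i x
  proof -
    have xi: "x \<in> e i ` {0..<L i}" using e[OF that(1)] that(2) unfolding bij_betw_def by auto
    show "r i x < L i" using inv_into_into[OF xi] unfolding r_def by simp
    show "e i (r i x) = x" using f_inv_into_f[OF xi] unfolding r_def by simp
  qed
  have re: "r i (e i a) = a" if "i \<in> I" "a < L i" for i a
    using e[OF that(1)] that(2) unfolding r_def bij_betw_def by (auto intro: inv_into_f_f)
  define c where "c k x = (if x \<in> \<Omega> then e (blk x) ((r (blk x) x + k) mod L (blk x)) else x)" for k x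
  have cB: "c k x = e i ((r i x + k) mod L i)" if "i \<in> I" "x \<in> B i" for i x k
    using that BI blk unfolding c_def by auto
  have cin: "c k x \<in> B i" if "i \<in> I" "x \<in> B i" for i x k
    using cB[OF that] e[OF that(1)] Lpos[OF that(1)] unfolding bij_betw_def by auto
  have cimg: "c k ` B i = B i" if "i \<in> I" "k < m" for i k
  proof
    show "c k ` B i \<subseteq> B i" using cin that by auto
    show "B i \<subseteq> c k ` B i"
    proof
      fix y assume y: "y \<in> B i"
      define a where "a = (r i y + L i - k) mod L i"
      have aL: "a < L i" using Lpos[OF that(1)] by (simp add: a_def)
      have x: "e i a \<in> B i" using e[OF that(1)] aL unfolding bij_betw_def by auto
      have "(a + k) mod L i = r i y"
      proof -
        have "(a + k) mod L i = (r i y + L i - k + k) mod L i"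
          unfolding a_def by (simp add: mod_add_left_eq)
        also have "\<dots> = (r i y + L i) mod L i" using Lpos[OF that(1)] that(2) by simp
        also have "\<dots> = r i y" using r[OF that(1) y] by simp
        finally show ?thesis .
      qed
      then have "c k (e i a) = y" using cB[OF that(1) x] re[OF that(1) aL] r[OF that(1) y] by simp
      then show "y \<in> c k ` B i" using x by (metis imageI)
    qed
  qed
  have cinj: "inj_on (c k) \<Omega>" if "k < m" for k
  proof (rule inj_onI)
    fix x y assume x: "x \<in> \<Omega>" and y: "y \<in> \<Omega>" and eq: "c k x = c k y"
    obtain i where i: "i \<in> I" "x \<in> B i" using cover x by blast
    obtain i' where i': "i' \<in> I" "y \<in> B i'" using cover y by blast
    have "i = i'" using cin[OF i, of k] cin[OF i', of k] eq disj[OF i(1) i'(1)] by auto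
    then have "e i ((r i x + k) mod L i) = e i ((r i y + k) mod L i)"
      using eq cB[OF i] cB[OF i'] by simp
    then have "(r i x + k) mod L i = (r i y + k) mod L i"
      using e[OF i(1)] Lpos[OF i(1)] unfolding bij_betw_def inj_on_def by auto
    moreover have "r i y < L i" using r(1)[of i y] i' \<open>i = i'\<close> by simp
    ultimately have "r i x = r i y" using r(1)[OF i] mod_add_cancel_lt by blast
    then show "x = y" using r(2)[OF i] r(2)[of i y] i' \<open>i = i'\<close> by metis
  qed
  show ?thesis
  proof (intro exI conjI allI impI ballI)
    fix k assume k: "k < m"
    have img: "c k ` \<Omega> = \<Omega>"
    proof -
      have eqO: "\<Omega> = (\<Union>i\<in>I. B i)"
      proof
        show "\<Omega> \<subseteq> (\<Union>i\<in>I. B i)" by (rule cover)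
        show "(\<Union>i\<in>I. B i) \<subseteq> \<Omega>" using BI by (rule UN_least)
      qed
      have "c k ` \<Omega> = (\<Union>i\<in>I. c k ` B i)" unfolding eqO by (rule image_UN)
      also have "\<dots> = (\<Union>i\<in>I. B i)" using cimg[OF _ k] by simp
      finally show ?thesis using eqO by simp
    qed
    have "c k permutes \<Omega>"
      proof (rule bij_imp_permutes)
      show "bij_betw (c k) \<Omega> \<Omega>" unfolding bij_betw_def using img cinj[OF k] by blast
      show "c k x = x" if "x \<notin> \<Omega>" for x using that unfolding c_def by simp
    qed
    then show "c k \<in> blockgrp \<Omega> I B" using cimg[OF _ k] unfolding blockgrp_def by auto
  next
    fix k k' x assume k: "k < m" and k': "k' < m" and ne: "k \<noteq> k'" and x: "x \<in> \<Omega>"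
    obtain i where i: "i \<in> I" "x \<in> B i" using cover x by blast
    show "c k x \<noteq> c k' x"
    proof
      assume "c k x = c k' x"
      then have "e i ((r i x + k) mod L i) = e i ((r i x + k') mod L i)" using cB[OF i] by simp
      then have "(r i x + k) mod L i = (r i x + k') mod L i"
        using e[OF i(1)] Lpos[OF i(1)] unfolding bij_betw_def inj_on_def by auto
      then have eq2: "(k + r i x) mod L i = (k' + r i x) mod L i" by (simp add: add.commute)
      have "k < L i" "k' < L i" using k k' Lpos(1)[OF i(1)] by auto
      from mod_add_cancel_lt[OF eq2 this] ne show False by blast
    qed
  qed
qed

lemma abstract_EKR:
  assumes fin: "finite \<Omega>" and BI: "\<And>i. i \<in> I \<Longrightarrow> B i \<subseteq> \<Omega>"
    and cover: "\<Omega> \<subseteq> (\<Union>i\<in>I. B i)"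
    and disj: "\<And>i i'. i \<in> I \<Longrightarrow> i' \<in> I \<Longrightarrow> i \<noteq> i' \<Longrightarrow> B i \<inter> B i' = {}"
    and j: "j \<in> I" and jmin: "\<And>i. i \<in> I \<Longrightarrow> card (B j) \<le> card (B i)"
    and x0: "x0 \<in> B j"
    and S: "intersecting_set \<Omega> (blockgrp \<Omega> I B) S"
  shows "card S \<le> card (point_stabilizer (blockgrp \<Omega> I B) x0)"
proof -
  let ?G = "blockgrp \<Omega> I B"
  define m where "m = card (B j)"
  have finB: "finite (B j)" using BI[OF j] fin finite_subset by blast
  have m0: "0 < m" using finB x0 unfolding m_def by (auto simp: card_gt_0_iff)
  have x0O: "x0 \<in> \<Omega>" using BI[OF j] x0 by blast
  obtain c where cG: "\<And>k. k < m \<Longrightarrow> c k \<in> ?G"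
    and cd: "\<And>k k' x. k < m \<Longrightarrow> k' < m \<Longrightarrow> k \<noteq> k' \<Longrightarrow> x \<in> \<Omega> \<Longrightarrow> c k x \<noteq> c k' x"
    using clique[OF fin BI cover disj, of m] jmin m0 unfolding m_def by blast
  define C where "C = c ` {..<m}"
  have injc: "inj_on c {..<m}"
  proof (rule inj_onI)
    fix k k' assume "k \<in> {..<m}" "k' \<in> {..<m}" "c k = c k'"
    then show "k = k'" using cd[of k k' x0] x0O by auto
  qed
  have cardC: "card C = m" unfolding C_def using card_image[OF injc] by simp
  have finG: "finite ?G"
    by (rule finite_subset[OF _ finite_permutations[OF fin]]) (auto simp: blockgrp_def)
  have SG: "S \<subseteq> ?G" and Sint: "\<And>p q. p \<in> S \<Longrightarrow> q \<in> S \<Longrightarrow> perms_intersect \<Omega> p q"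
    using S unfolding intersecting_set_def by auto
  have CG: "C \<subseteq> ?G" unfolding C_def using cG by auto
  have Cd: "\<And>a b x. a \<in> C \<Longrightarrow> b \<in> C \<Longrightarrow> a \<noteq> b \<Longrightarrow> x \<in> \<Omega> \<Longrightarrow> a x \<noteq> b x"
    unfolding C_def using cd by auto
  have inj: "inj_on (\<lambda>(a, s). a \<circ> s) (C \<times> S)"
  proof (rule inj_onI, clarify)
    fix a1 s1 a2 s2 assume a1: "a1 \<in> C" and s1: "s1 \<in> S" and a2: "a2 \<in> C" and s2: "s2 \<in> S"
      and eq: "a1 \<circ> s1 = a2 \<circ> s2"
    have a12: "a1 = a2"
    proof (rule ccontr)
      assume ne: "a1 \<noteq> a2"
      from Sint[OF s1 s2] obtain x where x: "x \<in> \<Omega>" and fx: "s1 (inv s2 x) = x"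
        unfolding perms_intersect_def by auto
      have s2p: "s2 permutes \<Omega>" using SG s2 unfolding blockgrp_def by auto
      have "s2 (inv s2 x) = x" using permutes_inverses(1)[OF s2p] .
      then have "a1 x = a2 x" using eq fx by (metis comp_apply)
      then show False using Cd[OF a1 a2 ne x] by simp
    qed
    have "a1 permutes \<Omega>" using CG a1 unfolding blockgrp_def by auto
    then have "inj a1" by (rule permutes_inj)
    then have "s1 = s2" using eq a12 by (auto simp: fun_eq_iff inj_def)
    then show "a1 = a2 \<and> s1 = s2" using a12 by simp
  qed
  have img: "(\<lambda>(a, s). a \<circ> s) ` (C \<times> S) \<subseteq> ?G"
    using CG SG by (auto intro: blockgrp_comp)
  have "m * card S = card (C \<times> S)" using cardC by (simp add: card_cartesian_product)
  also have "\<dots> \<le> card ?G" by (rule card_inj_on_le[OF inj img finG])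
  also have "\<dots> \<le> m * card (point_stabilizer ?G x0)"
    unfolding m_def by (rule fiber_bound[where \<Omega>=\<Omega> and I=I and B=B, OF fin BI j disj x0])
  finally show ?thesis using m0 by simp
qed


lemma sum_take_mono:
  fixes xs :: "nat list"
  assumes "i \<le> j" shows "sum_list (take i xs) \<le> sum_list (take j xs)"
proof -
  have "take j xs = take i xs @ take (j - i) (drop i xs)"
    using take_add[of i "j - i" xs] assms by simp
  then show ?thesis by (metis le_add1 sum_list_append)
qed

lemma sum_take_Suc:
  fixes xs :: "nat list"
  assumes "i < length xs" shows "sum_list (take (Suc i) xs) = sum_list (take i xs) + xs ! i"
  using assms by (simp add: take_Suc_conv_app_nth)

lemma young_block_sub:
  assumes "i < length lam" shows "young_block lam i \<subseteq> {1..sum_list lam}"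
proof -
  have "sum_list (take (Suc i) lam) \<le> sum_list (take (length lam) lam)"
    using assms by (intro sum_take_mono) simp
  then show ?thesis unfolding young_block_def by auto
qed

lemma young_block_card:
  assumes "i < length lam" shows "card (young_block lam i) = lam ! i"
  using assms unfolding young_block_def by (simp add: sum_take_Suc)

lemma young_block_disj:
  assumes "i < length lam" "i' < length lam" "i \<noteq> i'"
  shows "young_block lam i \<inter> young_block lam i' = {}"
proof -
  have *: "young_block lam a \<inter> young_block lam b = {}" if "a < b" for a b
  proof -
    have "sum_list (take (Suc a) lam) \<le> sum_list (take b lam)"
      using that by (intro sum_take_mono) simp
    then show ?thesis unfolding young_block_def by auto
  qed
  show ?thesis
  proof (cases "i < i'")
    case True then show ?thesis using * by blast
  next
    case False then have "i' < i" using assms(3) by simp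
    then show ?thesis using *[of i' i] by blast
  qed
qed

lemma young_block_cover:
  "1 \<le> x \<Longrightarrow> x \<le> sum_list lam \<Longrightarrow> \<exists>i<length lam. x \<in> young_block lam i"
proof (induction lam arbitrary: x)
  case Nil then show ?case by simp
next
  case (Cons a xs)
  show ?case
  proof (cases "x \<le> a")
    case True
    then have "x \<in> young_block (a # xs) 0" using Cons.prems unfolding young_block_def by simp
    then show ?thesis by blast
  next
    case False
    have "1 \<le> x - a" "x - a \<le> sum_list xs" using False Cons.prems by auto
    then obtain i where i: "i < length xs" "x - a \<in> young_block xs i"
      using Cons.IH[of "x - a"] by blast
    then have "x \<in> young_block (a # xs) (Suc i)" using False unfolding young_block_def by auto
    then show ?thesis using i by auto
  qed
qed

theorem corollary20:
  fixes lam :: "nat list" and n :: nat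
  assumes "is_partition lam n" and "n \<ge> 1"
  shows "has_EKR {1..n} (young_subgroup lam)"
proof -
  have sorted: "sorted_wrt (\<ge>) lam" and pos: "\<forall>x\<in>set lam. 0 < x" and sum: "sum_list lam = n"
    using assms(1) unfolding is_partition_def by auto
  have ne: "lam \<noteq> []" using sum assms(2) by auto
  let ?I = "{..<length lam}" and ?B = "young_block lam" and ?O = "{1..n}"
  have G: "young_subgroup lam = blockgrp ?O ?I ?B"
    unfolding young_subgroup_def blockgrp_def sum by auto
  define j where "j = length lam - 1"
  have j: "j \<in> ?I" using ne unfolding j_def by simp
  have jmin: "card (?B j) \<le> card (?B i)" if "i \<in> ?I" for i
  proof (cases "i = j")
    case True then show ?thesis by simp
  next
    case False
    then have "i < j" using that unfolding j_def by auto
    then have "lam ! j \<le> lam ! i" using sorted_wrt_nth_less[OF sorted, of i j] j by auto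
    then show ?thesis using young_block_card j that by simp
  qed
  have "card (?B j) > 0" using young_block_card j pos nth_mem by (metis lessThan_iff)
  then obtain x0 where x0: "x0 \<in> ?B j" by (metis card.empty ex_in_conv less_irrefl)
  have BI: "?B i \<subseteq> ?O" if "i \<in> ?I" for i using young_block_sub[of i lam] that sum by simp
  have cover: "?O \<subseteq> (\<Union>i\<in>?I. ?B i)" using young_block_cover[of _ lam] sum by fastforce
  have disj: "?B i \<inter> ?B i' = {}" if "i \<in> ?I" "i' \<in> ?I" "i \<noteq> i'" for i i'
    using young_block_disj that by simp
  have x0O: "x0 \<in> ?O" using BI[OF j] x0 by blast
  show ?thesis unfolding has_EKR_def
  proof (intro allI impI)
    fix S assume S: "intersecting_set ?O (young_subgroup lam) S"
    have "card S \<le> card (point_stabilizer (young_subgroup lam) x0)"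
      unfolding G by (rule abstract_EKR[OF _ BI cover disj j jmin x0]) (use S G in auto)
    also have "\<dots> \<le> Max ((\<lambda>x. card (point_stabilizer (young_subgroup lam) x)) ` ?O)"
      using x0O by (intro Max_ge) auto
    finally show "card S \<le> Max ((\<lambda>x. card (point_stabilizer (young_subgroup lam) x)) ` ?O)" .
  qed
qed

end
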